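(* Let $\mu>0$ and $\hbar>0$ be constants, and let $V:\mathbb{R}\to\mathbb{R}$ be a separable potential, i.e. there exist continuous real-valued functions $F$ and $G$ of one real variable such that $V\left(\frac{u+v}{2}\right)-V\left(\frac{u-v}{2}\right)=F(u)\,G(v)$ for all real $u,v$. Define, for real $u,u',v,v'$, $$\tilde{G}(v,v')=\int_{v'}^{v}G(v'')\,dv'',\qquad \tilde{F}(u,u')=\int_{u'}^{u}F(u'')\,du'',$$ and $$T_S(u,v)=\frac{u}{4}+\frac{\mu}{2\hbar^2}\int_{0}^{v}dv'\,G(v')\int_{0}^{u}du'\,F(u')\,\frac{u'}{4}\;{}_0F_1\!\left(;1;\frac{\mu}{2\hbar^2}\,\tilde{G}(v,v')\,\tilde{F}(u,u')\right).$$ Then $T_S$ satisfies the integral equation $$T_S(u,v)=\frac{u}{4}+\frac{\mu}{2\hbar^2}\int_{0}^{u}du'\int_{0}^{v}dv'\,F(u')\,G(v')\,T_S(u',v'),$$ and consequently the time kernel equation $$-\frac{2\hbar^2}{\mu}\frac{\partial^2 T_S(u,v)}{\partial u\,\partial v}+\left(V\left(\frac{u+v}{2}\right)-V\left(\frac{u-v}{2}\right)\right)T_S(u,v)=0$$ together with the boundary conditions $T_S(u,0)=u/4$ and $T_S(0,v)=0$.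
   Context: ${}_0F_1(;b;z)=\sum_{k=0}^{\infty}\frac{z^k}{(b)_k\,k!}$ denotes the confluent hypergeometric limit function, where $(b)_k$ is the Pochhammer symbol; in particular ${}_0F_1(;1;z)=\sum_{k\ge 0} z^k/(k!)^2$. The coordinates $u=q+q'$, $v=q-q'$ are the canonical coordinates in which the time kernel equation is written. *)

theory Defs
  imports "HOL-Analysis.Analysis"
begin

definition oint :: "real \<Rightarrow> real \<Rightarrow> (real \<Rightarrow> real) \<Rightarrow> real" where
  "oint a b f = (if a \<le> b then integral {a..b} f else - integral {b..a} f)"

definition hyp0F1_1 :: "real \<Rightarrow> real" where
  "hyp0F1_1 z = (\<Sum>k. z ^ k / (fact k) ^ 2)"

definition Gt :: "(real \<Rightarrow> real) \<Rightarrow> real \<Rightarrow> real \<Rightarrow> real" where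
  "Gt G v v' = oint v' v G"

definition Ft :: "(real \<Rightarrow> real) \<Rightarrow> real \<Rightarrow> real \<Rightarrow> real" where
  "Ft F u u' = oint u' u F"

definition TS :: "real \<Rightarrow> real \<Rightarrow> (real \<Rightarrow> real) \<Rightarrow> (real \<Rightarrow> real) \<Rightarrow> real \<Rightarrow> real \<Rightarrow> real" where
  "TS \<mu> hb F G u v =
     u / 4 + \<mu> / (2 * hb^2) *
       oint 0 v (\<lambda>v'. G v' *
         oint 0 u (\<lambda>u'. F u' * (u' / 4) *
           hyp0F1_1 (\<mu> / (2 * hb^2) * Gt G v v' * Ft F u u')))"

end

theory Submission
  imports Defs
begin

lemma oint_FTC:
  assumes "\<And>x. (H has_real_derivative h x) (at x)"
  shows "oint a b h = H b - H a"
proof (cases "a \<le> b")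
  case True
  have "(h has_integral (H b - H a)) {a..b}"
    by (rule fundamental_theorem_of_calculus[OF True])
       (auto simp: has_real_derivative_iff_has_vector_derivative[symmetric] intro: has_field_derivative_at_within assms)
  then show ?thesis using True by (simp add: oint_def integral_unique)
next
  case False
  have "(h has_integral (H a - H b)) {b..a}"
    by (rule fundamental_theorem_of_calculus) (use False in
       \<open>auto simp: has_real_derivative_iff_has_vector_derivative[symmetric] intro: has_field_derivative_at_within assms\<close>)
  then show ?thesis using False by (simp add: oint_def integral_unique)
qed

lemma cont_integrable: "continuous_on UNIV (h::real\<Rightarrow>real) \<Longrightarrow> h integrable_on {a..b}"
  by (meson continuous_on_subset integrable_continuous_interval subset_UNIV)

lemma oint_prim_deriv:
  assumes h: "continuous_on UNIV h"
  shows "((\<lambda>x. oint 0 x h) has_real_derivative h x) (at x)"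
proof -
  define a where "a = - (\<bar>x\<bar> + 1)"
  define b where "b = \<bar>x\<bar> + 1"
  have x: "x \<in> {a<..<b}" by (auto simp: a_def b_def)
  have d: "((\<lambda>y. integral {a..y} h) has_real_derivative h x) (at x within {a..b})"
    by (rule integral_has_real_derivative) (use x in \<open>auto intro: continuous_on_subset[OF h]\<close>)
  have "interior {a..b} = {a<..<b}" by simp
  then have "at x within {a..b} = at x" using x by (intro at_within_interior) auto
  with d have d2: "((\<lambda>y. integral {a..y} h - integral {a..0} h) has_real_derivative h x) (at x)"
    by (auto intro!: derivative_eq_intros)
  show ?thesis
  proof (rule has_field_derivative_transform_within_open[OF d2 _ x])
    fix y assume y: "y \<in> {a<..<b}"
    have a0: "a \<le> 0" "0 \<le> b" by (auto simp: a_def b_def)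
    show "integral {a..y} h - integral {a..0} h = oint 0 y h"
    proof (cases "0 \<le> y")
      case True
      have "integral {a..0} h + integral {0..y} h = integral {a..y} h"
        by (rule Henstock_Kurzweil_Integration.integral_combine) (use True a0 in \<open>auto intro: cont_integrable h\<close>)
      then show ?thesis using True by (simp add: oint_def)
    next
      case False
      have "integral {a..y} h + integral {y..0} h = integral {a..0} h"
        by (rule Henstock_Kurzweil_Integration.integral_combine) (use False y in \<open>auto intro: cont_integrable h\<close>)
      then show ?thesis using False by (simp add: oint_def)
    qed
  qed auto
qed

lemma oint_bound:
  assumes h: "continuous_on UNIV h" and B: "\<And>x. x \<in> {min a b..max a b} \<Longrightarrow> \<bar>h x\<bar> \<le> B"
  shows "\<bar>oint a b h\<bar> \<le> \<bar>b - a\<bar> * B"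
proof (cases "a \<le> b")
  case True
  have "norm (integral {a..b} h) \<le> B * (b - a)"
    by (rule integral_bound) (use True B in \<open>auto intro: continuous_on_subset[OF h]\<close>)
  then show ?thesis using True by (simp add: oint_def mult.commute)
next
  case False
  have "norm (integral {b..a} h) \<le> B * (a - b)"
    by (rule integral_bound) (use False B in \<open>auto intro: continuous_on_subset[OF h]\<close>)
  then show ?thesis using False by (simp add: oint_def mult.commute)
qed

lemma oint_mult: "oint a b (\<lambda>x. k * h x) = k * oint a b h"
  by (simp add: oint_def)

lemma oint_sum:
  assumes "finite A" "\<And>i. i \<in> A \<Longrightarrow> continuous_on UNIV (h i)"
  shows "oint a b (\<lambda>x. \<Sum>i\<in>A. h i x) = (\<Sum>i\<in>A. oint a b (h i))"
  using assms by (simp add: oint_def Henstock_Kurzweil_Integration.integral_sum cont_integrable sum_negf)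

lemma oint_same[simp]: "oint a a h = 0"
  by (simp add: oint_def)

lemma oint_suminf_sums:
  fixes h :: "nat \<Rightarrow> real \<Rightarrow> real"
  assumes cont: "\<And>n. continuous_on UNIV (h n)"
    and bnd: "\<And>n x. x \<in> {min a b..max a b} \<Longrightarrow> \<bar>h n x\<bar> \<le> M n"
    and M: "summable M"
  shows "(\<lambda>n. oint a b (h n)) sums oint a b (\<lambda>x. \<Sum>n. h n x)"
proof -
  define lo where "lo = min a b"
  define hi where "hi = max a b"
  have u: "uniform_limit {lo..hi} (\<lambda>n x. \<Sum>i<n. h i x) (\<lambda>x. \<Sum>i. h i x) sequentially"
    by (rule Weierstrass_m_test[OF _ M]) (use bnd in \<open>auto simp: lo_def hi_def\<close>)
  have c: "\<And>n. continuous_on {lo..hi} (\<lambda>x. \<Sum>i<n. h i x)"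
    by (intro continuous_intros continuous_on_subset[OF cont]) auto
  obtain I J where I: "\<And>n. ((\<lambda>x. \<Sum>i<n. h i x) has_integral I n) {lo..hi}"
    and J: "((\<lambda>x. \<Sum>i. h i x) has_integral J) {lo..hi}" and IJ: "I \<longlonglongrightarrow> J"
    by (rule uniform_limit_integral[OF u c]) auto
  have In: "I n = (\<Sum>i<n. integral {lo..hi} (h i))" for n
  proof -
    have "I n = integral {lo..hi} (\<lambda>x. \<Sum>i<n. h i x)" using I[of n] by (simp add: integral_unique)
    also have "\<dots> = (\<Sum>i<n. integral {lo..hi} (h i))"
      by (rule Henstock_Kurzweil_Integration.integral_sum) (auto intro: cont_integrable cont)
    finally show ?thesis .
  qed
  have s: "(\<lambda>i. integral {lo..hi} (h i)) sums J"
    using IJ unfolding sums_def In[symmetric] .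
  show ?thesis
  proof (cases "a \<le> b")
    case True
    then show ?thesis using s J by (simp add: oint_def lo_def hi_def integral_unique)
  next
    case False
    then have "(\<lambda>i. - integral {lo..hi} (h i)) sums (- J)" using s by (intro sums_minus)
    then show ?thesis using False s J by (simp add: oint_def lo_def hi_def integral_unique)
  qed
qed

lemma cont_bound:
  fixes h :: "real \<Rightarrow> real"
  assumes "continuous_on UNIV h" "compact K"
  shows "\<exists>B\<ge>0. \<forall>x\<in>K. \<bar>h x\<bar> \<le> B"
proof -
  have "compact (h ` K)" by (rule compact_continuous_image) (auto intro: continuous_on_subset[OF assms(1)] assms(2))
  then obtain B where "B > 0" "\<forall>y\<in>h ` K. norm y \<le> B" using compact_imp_bounded bounded_pos by metis
  then show ?thesis by (intro exI[of _ B]) auto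
qed

lemma summable_expK: "summable (\<lambda>n. A * K ^ n / fact n :: real)"
proof -
  have "summable (\<lambda>n. A * (inverse (fact n) * K ^ n))" by (intro summable_mult summable_exp)
  then show ?thesis by (simp add: field_simps)
qed


definition prim :: "(real \<Rightarrow> real) \<Rightarrow> real \<Rightarrow> real" where
  "prim h x = oint 0 x h"

fun W :: "(real \<Rightarrow> real) \<Rightarrow> nat \<Rightarrow> real \<Rightarrow> real" where
  "W F 0 u = u / 4"
| "W F (Suc j) u = oint 0 u (\<lambda>s. F s * W F j s)"

declare W.simps(2)[simp del]

definition Bt :: "(real \<Rightarrow> real) \<Rightarrow> nat \<Rightarrow> real \<Rightarrow> real" where
  "Bt F j u = oint 0 u (\<lambda>s. F s * (s / 4) * (- prim F s) ^ j)"

definition Q :: "(real \<Rightarrow> real) \<Rightarrow> nat \<Rightarrow> real \<Rightarrow> real" where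
  "Q F k u = oint 0 u (\<lambda>s. F s * (s / 4) * (prim F u - prim F s) ^ k)"

lemma prim_deriv: "continuous_on UNIV F \<Longrightarrow> (prim F has_real_derivative F x) (at x)"
  unfolding prim_def by (rule oint_prim_deriv)

lemma prim_cont: "continuous_on UNIV F \<Longrightarrow> continuous_on UNIV (prim F)"
  by (meson DERIV_continuous continuous_at_imp_continuous_on prim_deriv)

lemma prim_0[simp]: "prim F 0 = 0" by (simp add: prim_def)

lemma oint_prim: "continuous_on UNIV F \<Longrightarrow> oint a b F = prim F b - prim F a"
  by (rule oint_FTC) (rule prim_deriv)

lemma W_cont_deriv:
  assumes F: "continuous_on UNIV F"
  shows "continuous_on UNIV (W F j) \<and> (\<forall>u. (W F (Suc j) has_real_derivative F u * W F j u) (at u))"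
proof (induction j)
  case 0
  have c: "continuous_on UNIV (W F 0)" by (simp add: continuous_intros)
  show ?case using c by (auto simp: W.simps(2) intro!: oint_prim_deriv continuous_intros F)
next
  case (Suc j)
  then have c: "continuous_on UNIV (W F (Suc j))"
    by (meson DERIV_continuous continuous_at_imp_continuous_on)
  then show ?case
    by (auto simp del: W.simps(2) simp add: W.simps(2)[of F "Suc j"] intro!: oint_prim_deriv continuous_intros F)
qed

lemma W_cont: "continuous_on UNIV F \<Longrightarrow> continuous_on UNIV (W F j)"
  using W_cont_deriv by blast

lemma W_deriv: "continuous_on UNIV F \<Longrightarrow> (W F (Suc j) has_real_derivative F u * W F j u) (at u)"
  using W_cont_deriv by blast

lemma Bt_deriv:
  assumes F: "continuous_on UNIV F"
  shows "(Bt F j has_real_derivative F u * (u / 4) * (- prim F u) ^ j) (at u)"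
proof -
  have "continuous_on UNIV (\<lambda>s. F s * (s / 4) * (- prim F s) ^ j)"
    using prim_cont[OF F] by (auto intro!: continuous_intros F)
  from oint_prim_deriv[OF this] show ?thesis unfolding Bt_def[abs_def] .
qed

lemma Qexp:
  assumes F: "continuous_on UNIV F"
  shows "Q F m u = (\<Sum>j\<le>m. of_nat (m choose j) * prim F u ^ (m - j) * Bt F j u)"
proof -
  have pw: "F s * (s / 4) * (prim F u - prim F s) ^ m =
     (\<Sum>j\<le>m. of_nat (m choose j) * prim F u ^ (m - j) * (F s * (s / 4) * (- prim F s) ^ j))" for s
  proof -
    have "(prim F u - prim F s) ^ m = (- prim F s + prim F u) ^ m" by simp
    also have "\<dots> = (\<Sum>j\<le>m. of_nat (m choose j) * (- prim F s) ^ j * prim F u ^ (m - j))"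
      by (rule binomial_ring)
    finally show ?thesis by (simp add: sum_distrib_left mult_ac)
  qed
  have "Q F m u = oint 0 u (\<lambda>s. \<Sum>j\<le>m. of_nat (m choose j) * prim F u ^ (m - j) * (F s * (s / 4) * (- prim F s) ^ j))"
    unfolding Q_def pw ..
  also have "\<dots> = (\<Sum>j\<le>m. oint 0 u (\<lambda>s. of_nat (m choose j) * prim F u ^ (m - j) * (F s * (s / 4) * (- prim F s) ^ j)))"
    using prim_cont[OF F] by (intro oint_sum) (auto intro!: continuous_intros F)
  also have "\<dots> = (\<Sum>j\<le>m. of_nat (m choose j) * prim F u ^ (m - j) * Bt F j u)"
    by (rule sum.cong[OF refl]) (simp only: oint_mult Bt_def)
  finally show ?thesis .
qed

lemma Qderiv:
  assumes F: "continuous_on UNIV F"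
  shows "(Q F (Suc k) has_real_derivative of_nat (Suc k) * F u * Q F k u) (at u)"
proof -
  let ?p = "prim F u"
  have d: "((\<lambda>u. \<Sum>j\<le>Suc k. of_nat (Suc k choose j) * prim F u ^ (Suc k - j) * Bt F j u) has_real_derivative
     (\<Sum>j\<le>Suc k. of_nat (Suc k choose j) * (of_nat (Suc k - j) * ?p ^ (Suc k - j - 1) * F u) * Bt F j u
        + of_nat (Suc k choose j) * ?p ^ (Suc k - j) * (F u * (u / 4) * (- ?p) ^ j))) (at u)"
  proof (rule DERIV_sum)
    fix j assume "j \<in> {..Suc k}"
    show "((\<lambda>u. of_nat (Suc k choose j) * prim F u ^ (Suc k - j) * Bt F j u) has_real_derivative
      of_nat (Suc k choose j) * (of_nat (Suc k - j) * ?p ^ (Suc k - j - 1) * F u) * Bt F j u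
        + of_nat (Suc k choose j) * ?p ^ (Suc k - j) * (F u * (u / 4) * (- ?p) ^ j)) (at u)"
      by (rule DERIV_cong[OF DERIV_mult[OF DERIV_cmult[OF DERIV_power[OF prim_deriv[OF F]]] Bt_deriv[OF F]]])
         (simp add: algebra_simps)
  qed
  have s2: "(\<Sum>j\<le>Suc k. of_nat (Suc k choose j) * ?p ^ (Suc k - j) * (F u * (u / 4) * (- ?p) ^ j)) = 0"
  proof -
    have "(\<Sum>j\<le>Suc k. of_nat (Suc k choose j) * ?p ^ (Suc k - j) * (F u * (u / 4) * (- ?p) ^ j))
        = F u * (u / 4) * (\<Sum>j\<le>Suc k. of_nat (Suc k choose j) * (- ?p) ^ j * ?p ^ (Suc k - j))"
      by (simp only: sum_distrib_left) (rule sum.cong[OF refl], simp add: mult_ac)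
    also have "\<dots> = F u * (u / 4) * (- ?p + ?p) ^ Suc k" by (simp only: binomial_ring)
    finally show ?thesis by simp
  qed
  have s1: "(\<Sum>j\<le>Suc k. of_nat (Suc k choose j) * (of_nat (Suc k - j) * ?p ^ (Suc k - j - 1) * F u) * Bt F j u)
      = of_nat (Suc k) * F u * (\<Sum>j\<le>k. of_nat (k choose j) * ?p ^ (k - j) * Bt F j u)"
  proof -
    have "(\<Sum>j\<le>Suc k. of_nat (Suc k choose j) * (of_nat (Suc k - j) * ?p ^ (Suc k - j - 1) * F u) * Bt F j u)
       = (\<Sum>j\<le>k. of_nat (Suc k choose j) * (of_nat (Suc k - j) * ?p ^ (Suc k - j - 1) * F u) * Bt F j u)"
      by (simp add: sum.atMost_Suc)
    also have "\<dots> = (\<Sum>j\<le>k. of_nat (Suc k) * F u * (of_nat (k choose j) * ?p ^ (k - j) * Bt F j u))"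
    proof (rule sum.cong[OF refl])
      fix j assume j: "j \<in> {..k}"
      have e: "(Suc k - j) * (Suc k choose j) = Suc k * (k choose j)"
        using binomial_absorb_comp[of "Suc k" j] by simp
      have e2: "real (Suc k choose j) * real (Suc k - j) = real (Suc k) * real (k choose j)"
        using arg_cong[OF e, of real] by (simp only: of_nat_mult mult.commute)
      have "Suc k - j - 1 = k - j" by simp
      then show "of_nat (Suc k choose j) * (of_nat (Suc k - j) * ?p ^ (Suc k - j - 1) * F u) * Bt F j u
          = of_nat (Suc k) * F u * (of_nat (k choose j) * ?p ^ (k - j) * Bt F j u)"
        using e2 by (simp add: mult_ac)
    qed
    also have "\<dots> = of_nat (Suc k) * F u * (\<Sum>j\<le>k. of_nat (k choose j) * ?p ^ (k - j) * Bt F j u)"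
      by (simp add: sum_distrib_left)
    finally show ?thesis .
  qed
  have "Q F (Suc k) = (\<lambda>u. \<Sum>j\<le>Suc k. of_nat (Suc k choose j) * prim F u ^ (Suc k - j) * Bt F j u)"
    by (rule ext) (rule Qexp[OF F])
  moreover have "(\<Sum>j\<le>Suc k. of_nat (Suc k choose j) * (of_nat (Suc k - j) * ?p ^ (Suc k - j - 1) * F u) * Bt F j u
        + of_nat (Suc k choose j) * ?p ^ (Suc k - j) * (F u * (u / 4) * (- ?p) ^ j)) = of_nat (Suc k) * F u * Q F k u"
    by (simp only: sum.distrib s1 s2 Qexp[OF F] add_0_right)
  ultimately show ?thesis using d by simp
qed

lemma Q_0[simp]: "Q F k 0 = 0" by (simp add: Q_def)

lemma W_Q:
  assumes F: "continuous_on UNIV F"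
  shows "W F (Suc k) u = Q F k u / fact k"
proof (induction k arbitrary: u)
  case 0
  then show ?case by (simp add: Q_def W.simps(2))
next
  case (Suc k)
  have "W F (Suc (Suc k)) u = oint 0 u (\<lambda>s. F s * (Q F k s / fact k))"
    by (simp del: W.simps add: W.simps(2)[of F "Suc k"] Suc)
  also have "\<dots> = Q F (Suc k) u / fact (Suc k) - Q F (Suc k) 0 / fact (Suc k)"
  proof (rule oint_FTC)
    fix x
    show "((\<lambda>s. Q F (Suc k) s / fact (Suc k)) has_real_derivative F x * (Q F k x / fact k)) (at x)"
    proof -
      have eq: "of_nat (Suc k) * F x * Q F k x / fact (Suc k) = F x * (Q F k x / fact k)"
        by (simp add: fact_Suc divide_simps del: of_nat_Suc)
      show ?thesis using DERIV_cdivide[OF Qderiv[OF F, of k x], of "fact (Suc k)"] unfolding eq .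
    qed
  qed
  finally show ?case by simp
qed


lemma summable_bound: "(\<And>n. \<bar>f n\<bar> \<le> g n) \<Longrightarrow> summable g \<Longrightarrow> summable (f :: nat \<Rightarrow> real)"
  by (rule summable_comparison_test'[where N=0]) auto

lemma abs_mult_le: "\<bar>a\<bar> \<le> A \<Longrightarrow> \<bar>b\<bar> \<le> B \<Longrightarrow> \<bar>a * b\<bar> \<le> A * (B::real)"
  by (simp add: abs_mult mult_mono')

lemma abs_pow_le: "\<bar>a\<bar> \<le> A \<Longrightarrow> \<bar>a ^ k\<bar> \<le> (A::real) ^ k"
  by (simp add: power_abs power_mono)

lemma W_bound:
  assumes F: "continuous_on UNIV F" and B: "\<And>y. y \<in> {-r..r} \<Longrightarrow> \<bar>F y\<bar> \<le> B" and "0 \<le> B"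
    and "\<bar>s\<bar> \<le> r"
  shows "\<bar>W F j s\<bar> \<le> r / 4 * (B * r) ^ j"
  using assms(4)
proof (induction j arbitrary: s)
  case 0
  then show ?case by simp
next
  case (Suc j)
  have "\<bar>oint 0 s (\<lambda>t. F t * W F j t)\<bar> \<le> \<bar>s - 0\<bar> * (B * (r / 4 * (B * r) ^ j))"
  proof (rule oint_bound)
    show "continuous_on UNIV (\<lambda>t. F t * W F j t)" using W_cont[OF F] by (auto intro!: continuous_intros F)
    fix t assume t: "t \<in> {min 0 s..max 0 s}"
    then have "\<bar>t\<bar> \<le> r" using Suc.prems by auto
    then show "\<bar>F t * W F j t\<bar> \<le> B * (r / 4 * (B * r) ^ j)"
      by (intro abs_mult_le B Suc.IH) auto
  qed
  also have "\<dots> \<le> r * (B * (r / 4 * (B * r) ^ j))"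
    using Suc.prems \<open>0 \<le> B\<close> by (intro mult_right_mono) auto
  finally show ?case by (simp add: mult_ac W.simps(2))
qed

lemma hyp_summable: "summable (\<lambda>k. x ^ k / (fact k) ^ 2 :: real)"
proof (rule summable_bound[OF _ summable_expK[of 1 "\<bar>x\<bar>"]])
  fix n :: nat
  have f: "fact n \<le> (fact n :: real) ^ 2" using fact_ge_1[of n, where 'a=real]
    by (simp add: power2_eq_square)
  have "\<bar>x\<bar> ^ n / (fact n) ^ 2 \<le> \<bar>x\<bar> ^ n / fact n"
    by (rule divide_left_mono) (use f in auto)
  then show "\<bar>x ^ n / (fact n) ^ 2\<bar> \<le> 1 * \<bar>x\<bar> ^ n / fact n"
    by (simp add: power_abs)
qed

lemma fact_sq_le: "\<bar>z ^ k / (fact k) ^ 2\<bar> \<le> \<bar>z\<bar> ^ k / (fact k :: real)"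
proof -
  have f: "fact k \<le> (fact k :: real) ^ 2" using fact_ge_1[of k, where 'a=real]
    by (simp add: power2_eq_square)
  have "\<bar>z\<bar> ^ k / (fact k) ^ 2 \<le> \<bar>z\<bar> ^ k / fact k"
    by (rule divide_left_mono) (use f in auto)
  then show ?thesis by (simp add: power_abs)
qed

lemma Tser_summable:
  assumes F: "continuous_on UNIV F"
  shows "summable (\<lambda>j. a ^ j / fact j * W F j u)"
proof -
  define R where "R = \<bar>u\<bar>"
  obtain BF where BF: "BF \<ge> 0" "\<forall>y\<in>{-R..R}. \<bar>F y\<bar> \<le> BF" using cont_bound[OF F, of "{-R..R}"] by auto
  show ?thesis
  proof (rule summable_bound[OF _ summable_expK[of "R/4" "\<bar>a\<bar> * (BF * R)"]])
    fix n
    have "\<bar>a ^ n / fact n * W F n u\<bar> \<le> (\<bar>a\<bar> ^ n / fact n) * (R / 4 * (BF * R) ^ n)"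
      using BF by (intro abs_mult_le W_bound[OF F]) (auto simp: R_def power_abs)
    then show "\<bar>a ^ n / fact n * W F n u\<bar> \<le> R / 4 * (\<bar>a\<bar> * (BF * R)) ^ n / fact n"
      by (simp add: power_mult_distrib field_simps)
  qed
qed


lemma TS_series:
  assumes F: "continuous_on UNIV F" and G: "continuous_on UNIV G"
  shows "TS \<mu> hb F G u v = (\<Sum>j. (\<mu> / (2 * hb^2) * prim G v) ^ j / fact j * W F j u)"
proof -
  define c where "c = \<mu> / (2 * hb^2)"
  define R where "R = \<bar>u\<bar>"
  define Rv where "Rv = \<bar>v\<bar>"
  note cs = prim_cont[OF F] prim_cont[OF G] W_cont[OF F]
  obtain BF where BF: "BF \<ge> 0" "\<And>y. y\<in>{-R..R} \<Longrightarrow> \<bar>F y\<bar> \<le> BF" using cont_bound[OF F, of "{-R..R}"] by auto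
  obtain Bf where Bf: "Bf \<ge> 0" "\<And>y. y\<in>{-R..R} \<Longrightarrow> \<bar>prim F y\<bar> \<le> Bf" using cont_bound[OF cs(1), of "{-R..R}"] by auto
  obtain BG where BG: "BG \<ge> 0" "\<And>y. y\<in>{-Rv..Rv} \<Longrightarrow> \<bar>G y\<bar> \<le> BG" using cont_bound[OF G, of "{-Rv..Rv}"] by auto
  obtain Bg where Bg: "Bg \<ge> 0" "\<And>y. y\<in>{-Rv..Rv} \<Longrightarrow> \<bar>prim G y\<bar> \<le> Bg" using cont_bound[OF cs(2), of "{-Rv..Rv}"] by auto
  define inner where "inner v' = oint 0 u (\<lambda>u'. F u' * (u' / 4) * hyp0F1_1 (c * Gt G v v' * Ft F u u'))" for v'
  have inner_sums: "(\<lambda>k. (c * (prim G v - prim G v')) ^ k / fact k * W F (Suc k) u) sums inner v'" for v'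
  proof -
    define z where "z = c * (prim G v - prim G v')"
    have pw: "F u' * (u' / 4) * hyp0F1_1 (c * Gt G v v' * Ft F u u')
        = (\<Sum>k. z ^ k / (fact k) ^ 2 * (F u' * (u' / 4) * (prim F u - prim F u') ^ k))" for u'
    proof -
      define w where "w = prim F u - prim F u'"
      have e: "c * Gt G v v' * Ft F u u' = z * w"
        by (simp add: Gt_def Ft_def oint_prim[OF G] oint_prim[OF F] z_def w_def)
      have "(\<lambda>k. (z * w) ^ k / (fact k) ^ 2) sums hyp0F1_1 (z * w)"
        using hyp_summable by (simp add: hyp0F1_1_def summable_sums)
      then have "(\<lambda>k. F u' * (u' / 4) * ((z * w) ^ k / (fact k) ^ 2)) sums (F u' * (u' / 4) * hyp0F1_1 (z * w))"
        by (rule sums_mult)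
      moreover have "F u' * (u' / 4) * ((z * w) ^ k / (fact k) ^ 2) = z ^ k / (fact k) ^ 2 * (F u' * (u' / 4) * w ^ k)" for k
        by (simp add: power_mult_distrib mult_ac)
      ultimately show ?thesis unfolding e w_def[symmetric] by (simp add: sums_iff)
    qed
    have s: "(\<lambda>k. oint 0 u (\<lambda>u'. z ^ k / (fact k) ^ 2 * (F u' * (u' / 4) * (prim F u - prim F u') ^ k)))
        sums oint 0 u (\<lambda>u'. \<Sum>k. z ^ k / (fact k) ^ 2 * (F u' * (u' / 4) * (prim F u - prim F u') ^ k))"
    proof (rule oint_suminf_sums[where M="\<lambda>k. BF * (R / 4) * (\<bar>z\<bar> * (2 * Bf)) ^ k / fact k"])
      show "continuous_on UNIV (\<lambda>u'. z ^ k / (fact k) ^ 2 * (F u' * (u' / 4) * (prim F u - prim F u') ^ k))" for k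
        using cs by (auto intro!: continuous_intros F)
      show "summable (\<lambda>k. BF * (R / 4) * (\<bar>z\<bar> * (2 * Bf)) ^ k / fact k)" by (rule summable_expK)
      fix k u' assume u': "u' \<in> {min 0 u..max 0 u}"
      then have u'R: "u' \<in> {-R..R}" and uR: "u \<in> {-R..R}" by (auto simp: R_def)
      have w: "\<bar>prim F u - prim F u'\<bar> \<le> 2 * Bf" using Bf(2)[OF u'R] Bf(2)[OF uR] by linarith
      have "\<bar>z ^ k / (fact k) ^ 2 * (F u' * (u' / 4) * (prim F u - prim F u') ^ k)\<bar>
           \<le> \<bar>z\<bar> ^ k / fact k * (BF * (R / 4) * (2 * Bf) ^ k)"
        using u'R by (intro abs_mult_le fact_sq_le abs_pow_le w BF(2)) auto
      also have "\<dots> = BF * (R / 4) * (\<bar>z\<bar> * (2 * Bf)) ^ k / fact k"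
        by (simp add: power_mult_distrib mult_ac)
      finally show "\<bar>z ^ k / (fact k) ^ 2 * (F u' * (u' / 4) * (prim F u - prim F u') ^ k)\<bar>
           \<le> BF * (R / 4) * (\<bar>z\<bar> * (2 * Bf)) ^ k / fact k" .
    qed
    have t: "oint 0 u (\<lambda>u'. z ^ k / (fact k) ^ 2 * (F u' * (u' / 4) * (prim F u - prim F u') ^ k))
        = z ^ k / fact k * W F (Suc k) u" for k
      by (simp only: oint_mult Q_def[symmetric] W_Q[OF F]) (simp add: power2_eq_square)
    have "inner v' = oint 0 u (\<lambda>u'. \<Sum>k. z ^ k / (fact k) ^ 2 * (F u' * (u' / 4) * (prim F u - prim F u') ^ k))"
      unfolding inner_def pw ..
    moreover have "(\<lambda>k. z ^ k / fact k * W F (Suc k) u) sums oint 0 u (\<lambda>u'. \<Sum>k. z ^ k / (fact k) ^ 2 * (F u' * (u' / 4) * (prim F u - prim F u') ^ k))"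
      using s by (simp only: t)
    ultimately show ?thesis unfolding z_def by simp
  qed
  have outer_sums: "(\<lambda>k. c ^ k * prim G v ^ Suc k / fact (Suc k) * W F (Suc k) u) sums oint 0 v (\<lambda>v'. G v' * inner v')"
  proof -
    have pw2: "G v' * inner v' = (\<Sum>k. G v' * ((c * (prim G v - prim G v')) ^ k / fact k * W F (Suc k) u))" for v'
      using sums_unique[OF sums_mult[OF inner_sums, of "G v'"]] .
    define A where "A = BG * (R / 4) * (BF * R)"
    define K where "K = \<bar>c\<bar> * (2 * Bg) * (BF * R)"
    have s: "(\<lambda>k. oint 0 v (\<lambda>v'. G v' * ((c * (prim G v - prim G v')) ^ k / fact k * W F (Suc k) u)))
        sums oint 0 v (\<lambda>v'. \<Sum>k. G v' * ((c * (prim G v - prim G v')) ^ k / fact k * W F (Suc k) u))"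
    proof (rule oint_suminf_sums[where M="\<lambda>k. A * K ^ k / fact k"])
      show "continuous_on UNIV (\<lambda>v'. G v' * ((c * (prim G v - prim G v')) ^ k / fact k * W F (Suc k) u))" for k
        using cs by (auto intro!: continuous_intros G)
      show "summable (\<lambda>k. A * K ^ k / fact k)" by (rule summable_expK)
      fix k v' assume v': "v' \<in> {min 0 v..max 0 v}"
      then have v'R: "v' \<in> {-Rv..Rv}" and vR: "v \<in> {-Rv..Rv}" by (auto simp: Rv_def)
      have w: "\<bar>c * (prim G v - prim G v')\<bar> \<le> \<bar>c\<bar> * (2 * Bg)"
        using Bg(2)[OF v'R] Bg(2)[OF vR] by (simp add: abs_mult mult_left_mono)
      have Wb: "\<bar>W F (Suc k) u\<bar> \<le> R / 4 * (BF * R) ^ Suc k"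
        using BF by (intro W_bound[OF F]) (auto simp: R_def)
      have "\<bar>G v' * ((c * (prim G v - prim G v')) ^ k / fact k * W F (Suc k) u)\<bar>
           \<le> BG * ((\<bar>c\<bar> * (2 * Bg)) ^ k / fact k * (R / 4 * (BF * R) ^ Suc k))"
        using v'R by (intro abs_mult_le BG(2) Wb) (auto simp: power_abs intro!: divide_right_mono power_mono w)
      also have "\<dots> = A * K ^ k / fact k"
        by (simp add: A_def K_def power_mult_distrib mult_ac)
      finally show "\<bar>G v' * ((c * (prim G v - prim G v')) ^ k / fact k * W F (Suc k) u)\<bar> \<le> A * K ^ k / fact k" .
    qed
    have t: "oint 0 v (\<lambda>v'. G v' * ((c * (prim G v - prim G v')) ^ k / fact k * W F (Suc k) u))
        = c ^ k * prim G v ^ Suc k / fact (Suc k) * W F (Suc k) u" for k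
    proof -
      have "oint 0 v (\<lambda>v'. G v' * ((c * (prim G v - prim G v')) ^ k / fact k * W F (Suc k) u))
         = (\<lambda>x. - (c ^ k * (prim G v - prim G x) ^ Suc k / fact (Suc k) * W F (Suc k) u)) v
         - (\<lambda>x. - (c ^ k * (prim G v - prim G x) ^ Suc k / fact (Suc k) * W F (Suc k) u)) 0"
      proof (rule oint_FTC)
        fix x
        show "((\<lambda>x. - (c ^ k * (prim G v - prim G x) ^ Suc k / fact (Suc k) * W F (Suc k) u)) has_real_derivative
            G x * ((c * (prim G v - prim G x)) ^ k / fact k * W F (Suc k) u)) (at x)"
          by (rule DERIV_cong[OF DERIV_minus[OF DERIV_mult[OF DERIV_cdivide[OF DERIV_cmult[OF
                DERIV_power[OF DERIV_diff[OF DERIV_const prim_deriv[OF G]]]]] DERIV_const]]])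
             (unfold power_mult_distrib, simp add: fact_Suc field_simps del: of_nat_Suc)
      qed
      then show ?thesis by simp
    qed
    show ?thesis using s unfolding t pw2[symmetric] .
  qed
  have TSe: "TS \<mu> hb F G u v = u / 4 + c * oint 0 v (\<lambda>v'. G v' * inner v')"
    by (simp add: TS_def c_def inner_def)
  define t where "t j = (c * prim G v) ^ j / fact j * W F j u" for j
  have "(\<lambda>k. c * (c ^ k * prim G v ^ Suc k / fact (Suc k) * W F (Suc k) u)) sums (c * oint 0 v (\<lambda>v'. G v' * inner v'))"
    by (rule sums_mult[OF outer_sums])
  moreover have "c * (c ^ k * prim G v ^ Suc k / fact (Suc k) * W F (Suc k) u) = t (Suc k)" for k
    by (simp add: t_def power_mult_distrib)
  ultimately have "(\<lambda>k. t (Suc k)) sums (c * oint 0 v (\<lambda>v'. G v' * inner v'))" by simp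
  then have "t sums (c * oint 0 v (\<lambda>v'. G v' * inner v') + t 0)" by (simp only: sums_Suc_iff)
  then have "t sums TS \<mu> hb F G u v" by (simp add: TSe t_def add.commute)
  then have "TS \<mu> hb F G u v = suminf t" by (simp add: sums_iff)
  moreover have "t = (\<lambda>j. (\<mu> / (2 * hb^2) * prim G v) ^ j / fact j * W F j u)"
    by (rule ext) (simp add: t_def c_def)
  ultimately show ?thesis by simp
qed


lemma series_close:
  assumes "(\<lambda>k. c ^ k * x ^ Suc k / fact (Suc k) * W F (Suc k) u) sums X"
  shows "u / 4 + c * X = (\<Sum>j. (c * x) ^ j / fact j * W F j u)"
proof -
  define t where "t j = (c * x) ^ j / fact j * W F j u" for j
  have "(\<lambda>k. c * (c ^ k * x ^ Suc k / fact (Suc k) * W F (Suc k) u)) sums (c * X)"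
    by (rule sums_mult[OF assms])
  moreover have "c * (c ^ k * x ^ Suc k / fact (Suc k) * W F (Suc k) u) = t (Suc k)" for k
    by (simp add: t_def power_mult_distrib)
  ultimately have "(\<lambda>k. t (Suc k)) sums (c * X)" by simp
  then have "t sums (c * X + t 0)" by (simp only: sums_Suc_iff)
  then have "u / 4 + c * X = suminf t" by (simp add: sums_iff t_def add.commute)
  moreover have "t = (\<lambda>j. (c * x) ^ j / fact j * W F j u)"
    by (rule ext) (simp add: t_def)
  ultimately show ?thesis by simp
qed

lemma integral_eq:
  assumes F: "continuous_on UNIV F" and G: "continuous_on UNIV G"
  shows "TS \<mu> hb F G u v = u / 4 + \<mu> / (2 * hb^2) *
              oint 0 u (\<lambda>u'. oint 0 v (\<lambda>v'. F u' * G v' * TS \<mu> hb F G u' v'))"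
proof -
  define c where "c = \<mu> / (2 * hb^2)"
  define R where "R = \<bar>u\<bar>"
  define Rv where "Rv = \<bar>v\<bar>"
  note cs = prim_cont[OF F] prim_cont[OF G] W_cont[OF F]
  obtain BF where BF: "BF \<ge> 0" "\<And>y. y\<in>{-R..R} \<Longrightarrow> \<bar>F y\<bar> \<le> BF" using cont_bound[OF F, of "{-R..R}"] by auto
  obtain BG where BG: "BG \<ge> 0" "\<And>y. y\<in>{-Rv..Rv} \<Longrightarrow> \<bar>G y\<bar> \<le> BG" using cont_bound[OF G, of "{-Rv..Rv}"] by auto
  obtain Bg where Bg: "Bg \<ge> 0" "\<And>y. y\<in>{-Rv..Rv} \<Longrightarrow> \<bar>prim G y\<bar> \<le> Bg" using cont_bound[OF cs(2), of "{-Rv..Rv}"] by auto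
  have TSs: "TS \<mu> hb F G x y = (\<Sum>j. (c * prim G y) ^ j / fact j * W F j x)" for x y
    unfolding c_def by (rule TS_series[OF F G])
  define inner where "inner u' = oint 0 v (\<lambda>v'. F u' * G v' * TS \<mu> hb F G u' v')" for u'
  have inner_sums: "(\<lambda>j. F u' * c ^ j * prim G v ^ Suc j / fact (Suc j) * W F j u') sums inner u'" for u'
  proof -
    define R' where "R' = \<bar>u'\<bar>"
    obtain BF' where BF': "BF' \<ge> 0" "\<And>y. y\<in>{-R'..R'} \<Longrightarrow> \<bar>F y\<bar> \<le> BF'" using cont_bound[OF F, of "{-R'..R'}"] by auto
    have pw: "F u' * G v' * TS \<mu> hb F G u' v' = (\<Sum>j. F u' * G v' * ((c * prim G v') ^ j / fact j * W F j u'))" for v'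
      unfolding TSs using sums_unique[OF sums_mult[OF summable_sums[OF Tser_summable[OF F]], of "F u' * G v'"]] .
    define A where "A = \<bar>F u'\<bar> * BG * (R' / 4)"
    define K where "K = \<bar>c\<bar> * Bg * (BF' * R')"
    have s: "(\<lambda>j. oint 0 v (\<lambda>v'. F u' * G v' * ((c * prim G v') ^ j / fact j * W F j u')))
        sums oint 0 v (\<lambda>v'. \<Sum>j. F u' * G v' * ((c * prim G v') ^ j / fact j * W F j u'))"
    proof (rule oint_suminf_sums[where M="\<lambda>k. A * K ^ k / fact k"])
      show "continuous_on UNIV (\<lambda>v'. F u' * G v' * ((c * prim G v') ^ j / fact j * W F j u'))" for j
        using cs by (auto intro!: continuous_intros G)
      show "summable (\<lambda>k. A * K ^ k / fact k)" by (rule summable_expK)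
      fix j v' assume v': "v' \<in> {min 0 v..max 0 v}"
      then have v'R: "v' \<in> {-Rv..Rv}" by (auto simp: Rv_def)
      have w: "\<bar>c * prim G v'\<bar> \<le> \<bar>c\<bar> * Bg"
        using Bg(2)[OF v'R] by (simp add: abs_mult mult_left_mono)
      have Wb: "\<bar>W F j u'\<bar> \<le> R' / 4 * (BF' * R') ^ j"
        using BF' by (intro W_bound[OF F]) (auto simp: R'_def)
      have "\<bar>F u' * G v' * ((c * prim G v') ^ j / fact j * W F j u')\<bar>
           \<le> \<bar>F u'\<bar> * BG * ((\<bar>c\<bar> * Bg) ^ j / fact j * (R' / 4 * (BF' * R') ^ j))"
        using v'R by (intro abs_mult_le BG(2) Wb) (auto simp: power_abs intro!: divide_right_mono power_mono w)
      also have "\<dots> = A * K ^ j / fact j"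
        by (simp add: A_def K_def power_mult_distrib mult_ac)
      finally show "\<bar>F u' * G v' * ((c * prim G v') ^ j / fact j * W F j u')\<bar> \<le> A * K ^ j / fact j" .
    qed
    have t: "oint 0 v (\<lambda>v'. F u' * G v' * ((c * prim G v') ^ j / fact j * W F j u'))
        = F u' * c ^ j * prim G v ^ Suc j / fact (Suc j) * W F j u'" for j
    proof -
      have "oint 0 v (\<lambda>v'. F u' * G v' * ((c * prim G v') ^ j / fact j * W F j u'))
         = (\<lambda>x. F u' * c ^ j * prim G x ^ Suc j / fact (Suc j) * W F j u') v
         - (\<lambda>x. F u' * c ^ j * prim G x ^ Suc j / fact (Suc j) * W F j u') 0"
      proof (rule oint_FTC)
        fix x
        show "((\<lambda>x. F u' * c ^ j * prim G x ^ Suc j / fact (Suc j) * W F j u') has_real_derivative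
            F u' * G x * ((c * prim G x) ^ j / fact j * W F j u')) (at x)"
          by (rule DERIV_cong[OF DERIV_mult[OF DERIV_cdivide[OF DERIV_cmult[OF
                DERIV_power[OF prim_deriv[OF G]]]] DERIV_const]])
             (unfold power_mult_distrib, simp add: fact_Suc field_simps del: of_nat_Suc)
      qed
      then show ?thesis by simp
    qed
    have "inner u' = oint 0 v (\<lambda>v'. \<Sum>j. F u' * G v' * ((c * prim G v') ^ j / fact j * W F j u'))"
      unfolding inner_def pw ..
    with s show ?thesis unfolding t by simp
  qed
  have outer_sums: "(\<lambda>j. c ^ j * prim G v ^ Suc j / fact (Suc j) * W F (Suc j) u) sums oint 0 u inner"
  proof -
    have pw: "inner u' = (\<Sum>j. F u' * c ^ j * prim G v ^ Suc j / fact (Suc j) * W F j u')" for u'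
      using sums_unique[OF inner_sums] .
    define A where "A = BF * \<bar>prim G v\<bar> * (R / 4)"
    define K where "K = \<bar>c\<bar> * \<bar>prim G v\<bar> * (BF * R)"
    have s: "(\<lambda>j. oint 0 u (\<lambda>u'. F u' * c ^ j * prim G v ^ Suc j / fact (Suc j) * W F j u'))
        sums oint 0 u (\<lambda>u'. \<Sum>j. F u' * c ^ j * prim G v ^ Suc j / fact (Suc j) * W F j u')"
    proof (rule oint_suminf_sums[where M="\<lambda>k. A * K ^ k / fact k"])
      show "continuous_on UNIV (\<lambda>u'. F u' * c ^ j * prim G v ^ Suc j / fact (Suc j) * W F j u')" for j
        using cs by (auto intro!: continuous_intros F)
      show "summable (\<lambda>k. A * K ^ k / fact k)" by (rule summable_expK)
      fix j u' assume u': "u' \<in> {min 0 u..max 0 u}"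
      then have u'R: "u' \<in> {-R..R}" by (auto simp: R_def)
      have Wb: "\<bar>W F j u'\<bar> \<le> R / 4 * (BF * R) ^ j"
        using BF u'R by (intro W_bound[OF F]) auto
      have ff: "\<bar>prim G v\<bar> ^ Suc j / fact (Suc j) \<le> \<bar>prim G v\<bar> ^ Suc j / fact j"
        by (rule divide_left_mono) (auto simp: fact_mono)
      have "\<bar>F u' * c ^ j * prim G v ^ Suc j / fact (Suc j) * W F j u'\<bar>
          = \<bar>F u'\<bar> * (\<bar>c\<bar> ^ j * (\<bar>prim G v\<bar> ^ Suc j / fact (Suc j))) * \<bar>W F j u'\<bar>"
        by (simp add: abs_mult power_abs)
      also have "\<dots> \<le> BF * (\<bar>c\<bar> ^ j * (\<bar>prim G v\<bar> ^ Suc j / fact j)) * (R / 4 * (BF * R) ^ j)"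
        using BF(2)[OF u'R] Wb ff BF(1)
        by (intro mult_mono) (auto intro!: mult_left_mono)
      also have "\<dots> = A * K ^ j / fact j"
        by (simp add: A_def K_def power_mult_distrib mult_ac)
      finally show "\<bar>F u' * c ^ j * prim G v ^ Suc j / fact (Suc j) * W F j u'\<bar> \<le> A * K ^ j / fact j" .
    qed
    have t: "oint 0 u (\<lambda>u'. F u' * c ^ j * prim G v ^ Suc j / fact (Suc j) * W F j u')
        = c ^ j * prim G v ^ Suc j / fact (Suc j) * W F (Suc j) u" for j
    proof -
      have "oint 0 u (\<lambda>u'. F u' * c ^ j * prim G v ^ Suc j / fact (Suc j) * W F j u')
         = (\<lambda>x. c ^ j * prim G v ^ Suc j / fact (Suc j) * W F (Suc j) x) u
         - (\<lambda>x. c ^ j * prim G v ^ Suc j / fact (Suc j) * W F (Suc j) x) 0"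
      proof (rule oint_FTC)
        fix x
        show "((\<lambda>x. c ^ j * prim G v ^ Suc j / fact (Suc j) * W F (Suc j) x) has_real_derivative
            F x * c ^ j * prim G v ^ Suc j / fact (Suc j) * W F j x) (at x)"
          by (rule DERIV_cong[OF DERIV_cmult[OF W_deriv[OF F]]]) (simp add: mult_ac)
      qed
      then show ?thesis by (simp add: W.simps(2))
    qed
    have "oint 0 u inner = oint 0 u (\<lambda>u'. \<Sum>j. F u' * c ^ j * prim G v ^ Suc j / fact (Suc j) * W F j u')"
      unfolding pw ..
    with s show ?thesis unfolding t by simp
  qed
  have "u / 4 + c * oint 0 u inner = (\<Sum>j. (c * prim G v) ^ j / fact j * W F j u)"
    by (rule series_close[OF outer_sums])
  then show ?thesis unfolding TSs[of u v] c_def[symmetric] inner_def by simp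
qed


lemma series_deriv:
  fixes f f' :: "nat \<Rightarrow> real \<Rightarrow> real"
  assumes d: "\<And>n y. (f n has_real_derivative f' n y) (at y)"
    and b: "\<And>n y. y \<in> ball x 1 \<Longrightarrow> \<bar>f' n y\<bar> \<le> M n" and M: "summable M"
    and s: "summable (\<lambda>n. f n x)"
  shows "((\<lambda>y. \<Sum>n. f n y) has_real_derivative (\<Sum>n. f' n x)) (at x)"
proof (rule has_field_derivative_series'(2)[of "ball x 1" f f' x x])
  show "uniformly_convergent_on (ball x 1) (\<lambda>n x. \<Sum>i<n. f' i x)"
    by (rule Weierstrass_m_test'[OF _ M]) (use b in auto)
qed (auto intro: has_field_derivative_at_within d s)

lemma pow_pred_le: "of_nat j * \<bar>x::real\<bar> ^ (j - 1) \<le> (2 * (1 + \<bar>x\<bar>)) ^ j"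
proof -
  have "of_nat j \<le> (2::real) ^ j"
    using less_exp[of j] by (metis of_nat_le_iff of_nat_numeral of_nat_power less_imp_le)
  moreover have "\<bar>x\<bar> ^ (j - 1) \<le> (1 + \<bar>x\<bar>) ^ j"
  proof -
    have "\<bar>x\<bar> ^ (j - 1) \<le> (1 + \<bar>x\<bar>) ^ (j - 1)" by (rule power_mono) auto
    also have "\<dots> \<le> (1 + \<bar>x\<bar>) ^ j" by (rule power_increasing) auto
    finally show ?thesis .
  qed
  ultimately have "of_nat j * \<bar>x\<bar> ^ (j - 1) \<le> 2 ^ j * (1 + \<bar>x\<bar>) ^ j"
    by (intro mult_mono) auto
  then show ?thesis by (simp only: power_mult_distrib)
qed

fun Wd :: "(real \<Rightarrow> real) \<Rightarrow> nat \<Rightarrow> real \<Rightarrow> real" where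
  "Wd F 0 u = 1 / 4"
| "Wd F (Suc j) u = F u * W F j u"

lemma W_0_fun: "W F 0 = (\<lambda>u. u / 4)" by (rule ext) simp

lemma Wd_deriv: "continuous_on UNIV F \<Longrightarrow> (W F j has_real_derivative Wd F j u) (at u)"
  by (cases j) (auto simp: W_0_fun intro!: derivative_eq_intros W_deriv)

lemma Wd_bound:
  assumes F: "continuous_on UNIV F" and B: "\<And>y. y \<in> {-r..r} \<Longrightarrow> \<bar>F y\<bar> \<le> B" and "0 \<le> B"
    and "\<bar>s\<bar> \<le> r"
  shows "\<bar>Wd F j s\<bar> \<le> 1 / 4 * (B * r) ^ j"
proof (cases j)
  case (Suc k)
  have "\<bar>F s * W F k s\<bar> \<le> B * (r / 4 * (B * r) ^ k)"
    using assms by (intro abs_mult_le B W_bound[OF F]) auto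
  then show ?thesis using Suc by (simp add: mult_ac)
qed simp


lemma abs_div_fact_le: "\<bar>a\<bar> \<le> A \<Longrightarrow> \<bar>a / fact n\<bar> \<le> A / (fact n :: real)"
  by (simp add: divide_right_mono)

theorem mainTheorem1:
  fixes \<mu> hb :: real and V F G :: "real \<Rightarrow> real"
  assumes "\<mu> > 0" and "hb > 0"
    and "continuous_on UNIV F" and "continuous_on UNIV G"
    and sep: "\<And>u v. V ((u + v) / 2) - V ((u - v) / 2) = F u * G v"
  shows "(\<forall>u v. TS \<mu> hb F G u v =
            u / 4 + \<mu> / (2 * hb^2) *
              oint 0 u (\<lambda>u'. oint 0 v (\<lambda>v'. F u' * G v' * TS \<mu> hb F G u' v')))
       \<and> (\<exists>Tv :: real \<Rightarrow> real \<Rightarrow> real.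
            (\<forall>u v. ((\<lambda>v. TS \<mu> hb F G u v) has_real_derivative Tv u v) (at v))
          \<and> (\<forall>u v. \<exists>D. ((\<lambda>u. Tv u v) has_real_derivative D) (at u)
                 \<and> - (2 * hb^2 / \<mu>) * D
                   + (V ((u + v) / 2) - V ((u - v) / 2)) * TS \<mu> hb F G u v = 0))
       \<and> (\<forall>u. TS \<mu> hb F G u 0 = u / 4)
       \<and> (\<forall>v. TS \<mu> hb F G 0 v = 0)"
proof -
  note F = assms(3) and G = assms(4)
  note cs = prim_cont[OF F] prim_cont[OF G] W_cont[OF F]
  define c where "c = \<mu> / (2 * hb^2)"
  have TSs: "TS \<mu> hb F G x y = (\<Sum>j. (c * prim G y) ^ j / fact j * W F j x)" for x y
    unfolding c_def by (rule TS_series[OF F G])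
  define Tv where "Tv x y = (\<Sum>j. of_nat j * (c * prim G y) ^ (j - 1) * (c * G y) / fact j * W F j x)" for x y
  have dv: "((\<lambda>v. TS \<mu> hb F G u v) has_real_derivative Tv u v) (at v)" for u v
  proof -
    define R where "R = \<bar>u\<bar>"
    define Rv where "Rv = \<bar>v\<bar> + 1"
    obtain BF where BF: "BF \<ge> 0" "\<And>y. y\<in>{-R..R} \<Longrightarrow> \<bar>F y\<bar> \<le> BF" using cont_bound[OF F, of "{-R..R}"] by auto
    obtain BG where BG: "BG \<ge> 0" "\<And>y. y\<in>{-Rv..Rv} \<Longrightarrow> \<bar>G y\<bar> \<le> BG" using cont_bound[OF G, of "{-Rv..Rv}"] by auto
    obtain Bg where Bg: "Bg \<ge> 0" "\<And>y. y\<in>{-Rv..Rv} \<Longrightarrow> \<bar>prim G y\<bar> \<le> Bg" using cont_bound[OF cs(2), of "{-Rv..Rv}"] by auto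
    define A where "A = \<bar>c\<bar> * BG * (R / 4)"
    define K where "K = 2 * (1 + \<bar>c\<bar> * Bg) * (BF * R)"
    have "((\<lambda>y. \<Sum>j. (c * prim G y) ^ j / fact j * W F j u) has_real_derivative Tv u v) (at v)"
      unfolding Tv_def
    proof (rule series_deriv[where M="\<lambda>j. A * K ^ j / fact j"])
      fix n y
      show "((\<lambda>y. (c * prim G y) ^ n / fact n * W F n u) has_real_derivative
          of_nat n * (c * prim G y) ^ (n - 1) * (c * G y) / fact n * W F n u) (at y)"
        by (rule DERIV_cong[OF DERIV_mult[OF DERIV_cdivide[OF DERIV_power[OF DERIV_cmult[OF prim_deriv[OF G]]]] DERIV_const]])
           (simp add: mult_ac)
    next
      fix n y assume y: "y \<in> ball v 1"
      then have yR: "y \<in> {-Rv..Rv}" by (auto simp: Rv_def dist_real_def)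
      have a1: "\<bar>of_nat n * (c * prim G y) ^ (n - 1)\<bar> \<le> (2 * (1 + \<bar>c\<bar> * Bg)) ^ n"
      proof -
        have "\<bar>of_nat n * (c * prim G y) ^ (n - 1)\<bar> = of_nat n * \<bar>c * prim G y\<bar> ^ (n - 1)"
          by (simp add: abs_mult power_abs)
        also have "\<dots> \<le> (2 * (1 + \<bar>c * prim G y\<bar>)) ^ n" by (rule pow_pred_le)
        also have "\<dots> \<le> (2 * (1 + \<bar>c\<bar> * Bg)) ^ n"
          using Bg(2)[OF yR] by (intro power_mono) (auto simp: abs_mult mult_left_mono)
        finally show ?thesis .
      qed
      have a2: "\<bar>c * G y\<bar> \<le> \<bar>c\<bar> * BG" using BG(2)[OF yR] by (simp add: abs_mult mult_left_mono)
      have a3: "\<bar>W F n u\<bar> \<le> R / 4 * (BF * R) ^ n" using BF by (intro W_bound[OF F]) (auto simp: R_def)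
      have "\<bar>of_nat n * (c * prim G y) ^ (n - 1) * (c * G y) / fact n * W F n u\<bar>
          \<le> (2 * (1 + \<bar>c\<bar> * Bg)) ^ n * (\<bar>c\<bar> * BG) / fact n * (R / 4 * (BF * R) ^ n)"
        by (intro abs_mult_le abs_div_fact_le a1 a2 a3)
      also have "\<dots> = A * K ^ n / fact n" by (simp add: A_def K_def power_mult_distrib mult_ac)
      finally show "\<bar>of_nat n * (c * prim G y) ^ (n - 1) * (c * G y) / fact n * W F n u\<bar> \<le> A * K ^ n / fact n" .
    next
      show "summable (\<lambda>j. A * K ^ j / fact j)" by (rule summable_expK)
      show "summable (\<lambda>n. (c * prim G v) ^ n / fact n * W F n u)" by (rule Tser_summable[OF F])
    qed
    then show ?thesis by (simp only: TSs)
  qed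
  have du: "\<exists>D. ((\<lambda>u. Tv u v) has_real_derivative D) (at u)
                 \<and> - (2 * hb^2 / \<mu>) * D
                   + (V ((u + v) / 2) - V ((u - v) / 2)) * TS \<mu> hb F G u v = 0" for u v
  proof -
    define a where "a j = of_nat j * (c * prim G v) ^ (j - 1) * (c * G v) / fact j" for j
    have Tv_eq: "(\<lambda>u. Tv u v) = (\<lambda>y. \<Sum>j. a j * W F j y)" by (rule ext) (simp add: Tv_def a_def)
    define R where "R = \<bar>u\<bar> + 1"
    obtain BF where BF: "BF \<ge> 0" "\<And>y. y\<in>{-R..R} \<Longrightarrow> \<bar>F y\<bar> \<le> BF" using cont_bound[OF F, of "{-R..R}"] by auto
    define a0 where "a0 = (2 * (1 + \<bar>c * prim G v\<bar>))"
    have ab: "\<bar>a j\<bar> \<le> a0 ^ j * \<bar>c * G v\<bar> / fact j" for j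
    proof -
      have "\<bar>of_nat j * (c * prim G v) ^ (j - 1)\<bar> \<le> a0 ^ j"
        unfolding a0_def using pow_pred_le[of j "c * prim G v"] by (simp add: abs_mult power_abs)
      then show ?thesis unfolding a_def by (intro abs_div_fact_le abs_mult_le) auto
    qed
    have d: "((\<lambda>y. \<Sum>j. a j * W F j y) has_real_derivative (\<Sum>j. a j * Wd F j u)) (at u)"
    proof (rule series_deriv[where M="\<lambda>j. \<bar>c * G v\<bar> / 4 * (a0 * (BF * R)) ^ j / fact j"])
      fix n y
      show "((\<lambda>y. a n * W F n y) has_real_derivative a n * Wd F n y) (at y)"
        by (rule DERIV_cmult[OF Wd_deriv[OF F]])
    next
      fix n y assume y: "y \<in> ball u 1"
      then have yR: "\<bar>y\<bar> \<le> R" by (auto simp: R_def dist_real_def)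
      have "\<bar>a n * Wd F n y\<bar> \<le> a0 ^ n * \<bar>c * G v\<bar> / fact n * (1 / 4 * (BF * R) ^ n)"
        using BF yR by (intro abs_mult_le ab Wd_bound[OF F]) auto
      also have "\<dots> = \<bar>c * G v\<bar> / 4 * (a0 * (BF * R)) ^ n / fact n" by (simp add: power_mult_distrib mult_ac)
      finally show "\<bar>a n * Wd F n y\<bar> \<le> \<bar>c * G v\<bar> / 4 * (a0 * (BF * R)) ^ n / fact n" .
    next
      show "summable (\<lambda>j. \<bar>c * G v\<bar> / 4 * (a0 * (BF * R)) ^ j / fact j)" by (rule summable_expK)
      show "summable (\<lambda>n. a n * W F n u)"
      proof (rule summable_bound[OF _ summable_expK[of "\<bar>c * G v\<bar> * (R / 4)" "a0 * (BF * R)"]])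
        fix n
        have "\<bar>a n * W F n u\<bar> \<le> a0 ^ n * \<bar>c * G v\<bar> / fact n * (R / 4 * (BF * R) ^ n)"
          using BF by (intro abs_mult_le ab W_bound[OF F]) (auto simp: R_def)
        also have "\<dots> = \<bar>c * G v\<bar> * (R / 4) * (a0 * (BF * R)) ^ n / fact n" by (simp add: power_mult_distrib mult_ac)
        finally show "\<bar>a n * W F n u\<bar> \<le> \<bar>c * G v\<bar> * (R / 4) * (a0 * (BF * R)) ^ n / fact n" .
      qed
    qed
    have Dval: "(\<Sum>j. a j * Wd F j u) = c * F u * G v * TS \<mu> hb F G u v"
    proof -
      have "(\<lambda>k. c * F u * G v * ((c * prim G v) ^ k / fact k * W F k u)) sums (c * F u * G v * TS \<mu> hb F G u v)"
        unfolding TSs by (rule sums_mult[OF summable_sums[OF Tser_summable[OF F]]])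
      moreover have "c * F u * G v * ((c * prim G v) ^ k / fact k * W F k u) = a (Suc k) * Wd F (Suc k) u" for k
        by (simp add: a_def fact_Suc del: of_nat_Suc)
      ultimately have "(\<lambda>k. a (Suc k) * Wd F (Suc k) u) sums (c * F u * G v * TS \<mu> hb F G u v)" by simp
      then have "(\<lambda>j. a j * Wd F j u) sums (c * F u * G v * TS \<mu> hb F G u v + a 0 * Wd F 0 u)"
        using sums_Suc_iff[of "\<lambda>j. a j * Wd F j u"] by simp
      then show ?thesis by (simp add: sums_iff a_def)
    qed
    have eq: "- (2 * hb^2 / \<mu>) * (c * F u * G v * TS \<mu> hb F G u v)
            + (V ((u + v) / 2) - V ((u - v) / 2)) * TS \<mu> hb F G u v = 0"
      using assms(1,2) by (simp add: sep c_def field_simps)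
    show ?thesis
      by (rule exI[of _ "\<Sum>j. a j * Wd F j u"]) (use d Dval eq Tv_eq in simp)
  qed
  show ?thesis
  proof (intro conjI allI exI[of _ Tv])
    show "TS \<mu> hb F G u v = u / 4 + \<mu> / (2 * hb^2) *
              oint 0 u (\<lambda>u'. oint 0 v (\<lambda>v'. F u' * G v' * TS \<mu> hb F G u' v'))" for u v
      by (rule integral_eq[OF F G])
    show "((\<lambda>v. TS \<mu> hb F G u v) has_real_derivative Tv u v) (at v)" for u v by (rule dv)
    show "\<exists>D. ((\<lambda>u. Tv u v) has_real_derivative D) (at u)
                 \<and> - (2 * hb^2 / \<mu>) * D
                   + (V ((u + v) / 2) - V ((u - v) / 2)) * TS \<mu> hb F G u v = 0" for u v by (rule du)
    show "TS \<mu> hb F G u 0 = u / 4" for u by (simp add: TS_def)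
    show "TS \<mu> hb F G 0 v = 0" for v by (simp add: TS_def oint_def)
  qed
qed

end
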